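(* Let $d\ge1$, $\vec\gamma\in\mathbb{C}^d$, and let $b,\beta_1,\beta_2\in\mathbb{C}$ be nonzero. For nonzero $\beta\in\mathbb{C}$ and $\vec\delta\in\mathbb{C}^d$, and a point $\alpha\in L$ with $1+b\alpha^{\beta}=0$, let $\phi(\vec a;\vec\delta,b,\beta)$ denote a smooth map from a neighborhood of $\vec 0\in\mathbb{C}^d$ to $L$ satisfying $\phi(\vec 0;\vec\delta,b,\beta)=\alpha$ and \[ 1+b\,\phi(\vec a;\vec\delta,b,\beta)^{\beta}+\sum_{i=1}^d a_i\,\phi(\vec a;\vec\delta,b,\beta)^{\delta_i}=0 \] for all $\vec a$ in that neighborhood. Let $\alpha_1\in L$ satisfy $1+b\alpha_1^{\beta_1}=0$ and let $\phi(\vec a;\vec\gamma,b,\beta_1)$ be such a map with $\phi(\vec 0)=\alpha_1$. Let $\alpha_2\in L$ be the point with $\log\alpha_2=\beta_2^{-1}\log\alpha_1$ (so $\alpha_2=\alpha_1^{1/\beta_2}$), and let $\phi(\vec a;\beta_2\vec\gamma,b,\beta_2\beta_1)$ be such a map with exponents $\beta_2\vec\gamma$ and $\beta_2\beta_1$ and with $\phi(\vec 0)=\alpha_2$. Then, as Taylor series about $\vec a=\vec 0$, \[ \phi(\vec a;\vec\gamma,b,\beta_1)^{1/\beta_2}=\phi(\vec a;\beta_2\vec\gamma,b,\beta_2\beta_1). \]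
   Context: $L$ is the Riemann surface of the logarithm, parametrized by triples $(r,\theta,n)$ with $r>0$, $\theta\in(-\pi,\pi]$, $n\in\mathbb{Z}$; for $z=(r,\theta,n)\in L$ and $\gamma\in\mathbb{C}$, $z^\gamma=e^{\gamma\ln r+i\gamma\theta+2\pi i n\gamma}$, and $\log z=\ln r+i\theta+2\pi i n$ (a bijection $L\to\mathbb{C}$). Taylor series of $L$-valued maps are taken in the local coordinate $z\mapsto z^1$. Note $1+b\alpha_2^{\beta_2\beta_1}=1+b\alpha_1^{\beta_1}=0$. *)

theory Defs
  imports "HOL-Analysis.Analysis"
begin

text \<open>The Riemann surface of the logarithm: triples (r, theta, n), r > 0, theta in (-pi, pi], n integer.\<close>
typedef L = "{(r::real, th::real, n::int). 0 < r \<and> -pi < th \<and> th \<le> pi}"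
  by (rule exI[of _ "(1, 0, 0)"]) simp

definition Llog :: "L \<Rightarrow> complex" where
  "Llog z = (case Rep_L z of (r, th, n) \<Rightarrow>
      complex_of_real (ln r) + \<i> * complex_of_real th + 2 * complex_of_real pi * \<i> * of_int n)"

definition Lpow :: "L \<Rightarrow> complex \<Rightarrow> complex" where
  "Lpow z g = (case Rep_L z of (r, th, n) \<Rightarrow>
      exp (g * complex_of_real (ln r) + \<i> * g * complex_of_real th
           + 2 * complex_of_real pi * \<i> * of_int n * g))"

definition is_phi_map ::
  "('n::finite) itself \<Rightarrow> (complex^'n) set \<Rightarrow> (complex^'n \<Rightarrow> L) \<Rightarrow> complex^'n \<Rightarrow> complex \<Rightarrow> complex \<Rightarrow> L \<Rightarrow> bool" where
  "is_phi_map _ U phi delta b beta alpha \<longleftrightarrow>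
     open U \<and> 0 \<in> U \<and> (Llog \<circ> phi) differentiable_on U \<and> phi 0 = alpha \<and>
     (\<forall>a\<in>U. 1 + b * Lpow (phi a) beta + (\<Sum>i\<in>UNIV. a $ i * Lpow (phi a) (delta $ i)) = 0)"

end

theory Submission
  imports Defs
begin
lemma Lpow_eq: "Lpow z g = exp (g * Llog z)"
  unfolding Lpow_def Llog_def by (cases "Rep_L z") (simp add: algebra_simps)

lemma inj_near:
  fixes h h' :: "complex \<Rightarrow> complex"
  assumes d: "\<And>w. w\<in>ball w0 r \<Longrightarrow> (h has_field_derivative h' w) (at w)"
    and b: "\<And>w. w\<in>ball w0 r \<Longrightarrow> norm (h' w - c) \<le> norm c / 2" and c: "c \<noteq> 0"
    and x: "x\<in>ball w0 r" and y: "y\<in>ball w0 r" and e: "h x = h y"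
  shows "x = y"
proof -
  have d2: "((\<lambda>w. h w - c * w) has_field_derivative h' w - c) (at w within ball w0 r)"
    if "w \<in> ball w0 r" for w
  proof -
    have "((\<lambda>w. h w - c * w) has_field_derivative h' w - c * 1) (at w)"
      by (intro DERIV_diff DERIV_cmult DERIV_ident d that)
    thus ?thesis by (simp add: has_field_derivative_at_within)
  qed
  have "norm ((h x - c*x) - (h y - c*y)) \<le> norm c / 2 * norm (x - y)"
    by (rule field_differentiable_bound[OF convex_ball d2 b x y])
  moreover have "(h x - c*x) - (h y - c*y) = - (c * (x - y))"
    using e by (simp add: algebra_simps)
  ultimately have "norm c * norm (x - y) \<le> norm c / 2 * norm (x - y)"
    by (simp add: norm_mult)
  moreover have "norm c > 0" using c by simp
  moreover have "norm c * norm (x - y) = 2 * (norm c / 2 * norm (x - y))" by simp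
  ultimately have "norm c / 2 * norm (x - y) \<le> 0" by linarith
  with \<open>norm c > 0\<close> have "norm (x - y) \<le> 0" by (simp add: mult_le_0_iff)
  thus ?thesis by simp
qed

theorem theorem4p1:
  fixes gamma :: "complex^'n::finite" and b beta1 beta2 :: complex
    and alpha1 alpha2 :: L and phi1 phi2 :: "complex^'n \<Rightarrow> L"
    and U1 U2 :: "(complex^'n) set"
  assumes "b \<noteq> 0" and "beta1 \<noteq> 0" and "beta2 \<noteq> 0"
    and "1 + b * Lpow alpha1 beta1 = 0"
    and "is_phi_map TYPE('n) U1 phi1 gamma b beta1 alpha1"
    and "Llog alpha2 = Llog alpha1 / beta2"
    and "is_phi_map TYPE('n) U2 phi2 (beta2 *s gamma) b (beta2 * beta1) alpha2"
  shows "\<forall>\<^sub>F a in nhds 0. Lpow (phi1 a) (1 / beta2) = Lpow (phi2 a) 1"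
proof -
  define f1 where "f1 = Llog \<circ> phi1"
  define f2 where "f2 = Llog \<circ> phi2"
  define w0 where "w0 = Llog alpha2"
  define bb where "bb = beta2 * beta1"
  define dl where "dl = beta2 *s gamma"
  define F where "F a w = 1 + b * exp (bb * w) + (\<Sum>i\<in>UNIV. a $ i * exp (dl $ i * w))"
    for a :: "complex^'n" and w
  define D where "D a w = b * bb * exp (bb * w) + (\<Sum>i\<in>UNIV. a $ i * dl $ i * exp (dl $ i * w))"
    for a :: "complex^'n" and w
  define c where "c = D 0 w0"
  have c: "c = b * bb * exp (bb * w0)" by (simp add: c_def D_def)
  have c0: "c \<noteq> 0" using assms(1-3) by (simp add: c bb_def)
  have deriv: "((F a) has_field_derivative D a w) (at w)" for a w
    unfolding F_def D_def
    by (auto intro!: derivative_eq_intros simp: algebra_simps)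
  have "isCont (\<lambda>p. D (fst p) (snd p)) (0, w0)"
    unfolding D_def by (intro continuous_intros)
  hence "((\<lambda>p. D (fst p) (snd p)) \<longlongrightarrow> c) (nhds (0, w0))"
    using tendsto_at_iff_tendsto_nhds[of "\<lambda>p. D (fst p) (snd p)" "(0, w0)"]
    by (simp add: isCont_def c_def)
  hence "\<forall>\<^sub>F p in nhds (0, w0). dist (D (fst p) (snd p)) c < norm c / 2"
    using c0 by (intro tendstoD) auto
  then obtain Pf Pg where Pf: "eventually Pf (nhds 0)" and Pg: "eventually Pg (nhds w0)"
    and PP: "\<And>x y. Pf x \<Longrightarrow> Pg y \<Longrightarrow> dist (D x y) c < norm c / 2"
    unfolding nhds_prod eventually_prod_filter by auto
  from Pg obtain r where r: "r > 0" "\<And>y. dist y w0 < r \<Longrightarrow> Pg y"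
    unfolding eventually_nhds_metric by auto
  have m1: "open U1" "0 \<in> U1" "f1 differentiable_on U1" "phi1 0 = alpha1"
     "\<And>a. a \<in> U1 \<Longrightarrow> 1 + b * Lpow (phi1 a) beta1 + (\<Sum>i\<in>UNIV. a $ i * Lpow (phi1 a) (gamma $ i)) = 0"
    using assms(5) unfolding is_phi_map_def f1_def by auto
  have m2: "open U2" "0 \<in> U2" "f2 differentiable_on U2" "phi2 0 = alpha2"
     "\<And>a. a \<in> U2 \<Longrightarrow> 1 + b * Lpow (phi2 a) bb + (\<Sum>i\<in>UNIV. a $ i * Lpow (phi2 a) (dl $ i)) = 0"
    using assms(7) unfolding is_phi_map_def f2_def bb_def dl_def by auto
  have "isCont f1 0"
    using m1 differentiable_imp_continuous_on continuous_on_eq_continuous_at by blast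
  hence "(f1 \<longlongrightarrow> f1 0) (nhds 0)"
    using tendsto_at_iff_tendsto_nhds[of f1 0] by (simp add: isCont_def)
  hence "((\<lambda>a. f1 a / beta2) \<longlongrightarrow> f1 0 / beta2) (nhds 0)"
    using assms(3) by (intro tendsto_intros)
  moreover have "f1 0 / beta2 = w0" using m1(4) assms(6) by (simp add: w0_def f1_def)
  ultimately have "((\<lambda>a. f1 a / beta2) \<longlongrightarrow> w0) (nhds 0)" by simp
  hence e1: "\<forall>\<^sub>F a in nhds 0. dist (f1 a / beta2) w0 < r" using r by (intro tendstoD)
  have "isCont f2 0"
    using m2 differentiable_imp_continuous_on continuous_on_eq_continuous_at by blast
  hence "(f2 \<longlongrightarrow> f2 0) (nhds 0)"
    using tendsto_at_iff_tendsto_nhds[of f2 0] by (simp add: isCont_def)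
  hence "(f2 \<longlongrightarrow> w0) (nhds 0)"
    using m2(4) by (simp add: w0_def f2_def)
  hence e2: "\<forall>\<^sub>F a in nhds 0. dist (f2 a) w0 < r" using r by (intro tendstoD)
  have eU1: "\<forall>\<^sub>F a in nhds 0. a \<in> U1" using m1 eventually_nhds by blast
  have eU2: "\<forall>\<^sub>F a in nhds 0. a \<in> U2" using m2 eventually_nhds by blast
  show ?thesis
    using eventually_conj[OF Pf eventually_conj[OF e1 eventually_conj[OF e2 eventually_conj[OF eU1 eU2]]]]
  proof (rule eventually_mono, elim conjE)
    fix a assume a: "Pf a" "dist (f1 a / beta2) w0 < r" "dist (f2 a) w0 < r" "a \<in> U1" "a \<in> U2"
    have h1: "F a (f1 a / beta2) = 0"
    proof -
      have "bb * (f1 a / beta2) = beta1 * f1 a" using assms(3) by (simp add: bb_def)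
      moreover have "dl $ i * (f1 a / beta2) = gamma $ i * f1 a" for i
        using assms(3) by (simp add: dl_def)
      ultimately show ?thesis using m1(5)[OF a(4)] by (simp add: F_def Lpow_eq f1_def mult.commute)
    qed
    have h2: "F a (f2 a) = 0"
      using m2(5)[OF a(5)] by (simp add: F_def Lpow_eq f2_def mult.commute)
    have "f1 a / beta2 = f2 a"
    proof (rule inj_near[of w0 r "F a" "D a" c])
      fix w assume "w \<in> ball w0 r"
      hence "Pg w" using r by (simp add: dist_commute)
      thus "norm (D a w - c) \<le> norm c / 2" using PP[OF a(1)] by (simp add: dist_norm less_imp_le)
    next
      show "f1 a / beta2 \<in> ball w0 r" using a(2) by (simp add: dist_commute)
    next
      show "f2 a \<in> ball w0 r" using a(3) by (simp add: dist_commute)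
    qed (use deriv c0 h1 h2 in simp_all)
    thus "Lpow (phi1 a) (1 / beta2) = Lpow (phi2 a) 1"
      by (simp add: Lpow_eq f1_def f2_def)
  qed
qed
end
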